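(* For every $k\ge1$, $\alpha_k(z)$ satisfies a differential equation of the form \[ \frac{d\alpha_k}{dz}=\alpha_k+k\frac{(k+1)^k}{(k+1)!}e^{(k+1)z}+e^z\sum_{m=1}^k(-1)^m f_m^{(k)}(z)\,e^{(k-m)z}, \] where $f_m^{(k)}(z)\in\mathbb Q[z]$ has degree exactly $2m$ and positive leading coefficient for $1\le m\le k-1$, and $f_k^{(k)}(z)\in\mathbb Q[z]$ has degree exactly $2k-1$ and positive leading coefficient.
   Context: For $n\ge3$, $P_n(t)=\sum_k a_{k,n}t^k\in\mathbb Z[t]$ is defined by $P_3=1$ and $P_n(t)=P_{n-1}(t)(1+t)+t\sum_{i=3}^{n-2}\binom{n-2}{i-1}P_i(t)P_{n+1-i}(t)$ for $n>3$ (so $a_{k,n}=\operatorname{rk}H^{2k}(\overline{\mathcal M}_{0,n},\mathbb Q)$). Set $\alpha_k(z)=\sum_{n\ge3}a_{k,n}\frac{z^{n-1}}{(n-1)!}$. *)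

theory Defs
  imports "HOL-Computational_Algebra.Computational_Algebra"
begin

text \<open>The polynomials P_n(t) in Z[t] (only n >= 3 is meaningful; P_n = 1 for n <= 3).\<close>
function Pn :: "nat \<Rightarrow> int poly" where
  "Pn n = (if n \<le> 3 then 1
           else Pn (n - 1) * [:1, 1:] +
                [:0, 1:] * (\<Sum>i\<in>{3..n-2}. of_nat ((n - 2) choose (i - 1)) * Pn i * Pn (n + 1 - i)))"
  by auto
termination
  by (relation "measure id") auto

definition a_coeff :: "nat \<Rightarrow> nat \<Rightarrow> int" where
  "a_coeff k n = coeff (Pn n) k"

text \<open>alpha_k(z) = sum_{n>=3} a_{k,n} z^{n-1}/(n-1)!, as a formal power series over Q:
  the coefficient of z^j is a_{k,j+1}/j! for j >= 2 and 0 otherwise.\<close>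
definition alpha :: "nat \<Rightarrow> rat fps" where
  "alpha k = Abs_fps (\<lambda>j. if 3 \<le> j + 1 then of_int (a_coeff k (j + 1)) / fact j else 0)"

end

theory Submission
  imports Defs
begin


declare Pn.simps[simp del]

lemma Pn_small: "n \<le> 3 \<Longrightarrow> Pn n = 1"
  by (subst Pn.simps) simp

lemma Pn_big: "4 \<le> n \<Longrightarrow> Pn n = Pn (n - 1) * [:1, 1:] +
                [:0, 1:] * (\<Sum>i\<in>{3..n-2}. of_nat ((n - 2) choose (i - 1)) * Pn i * Pn (n + 1 - i))"
  by (subst Pn.simps) simp

lemma Pn_coeff0: "coeff (Pn n) 0 = 1"
proof (induction n rule: less_induct)
  case (less n)
  show ?case
  proof (cases "n \<le> 3")
    case True then show ?thesis by (simp add: Pn_small)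
  next
    case False
    then show ?thesis using less[of "n-1"] by (simp add: Pn_big[of n])
  qed
qed

lemma a_rec:
  assumes "4 \<le> n"
  shows "a_coeff (Suc k) n = a_coeff (Suc k) (n-1) + a_coeff k (n-1) +
     (\<Sum>i\<in>{3..n-2}. int ((n-2) choose (i-1)) * (\<Sum>a\<le>k. a_coeff a i * a_coeff (k-a) (n+1-i)))"
proof -
  have m: "[:0, 1:] * S = pCons 0 S" for S :: "int poly" by simp
  have m2: "P * [:1, 1:] = P + pCons 0 P" for P :: "int poly"
    by (simp add: mult_pCons_right)
  have m3: "coeff (of_nat c * P * Q) j = of_nat c * (\<Sum>a\<le>j. coeff P a * coeff Q (j-a))"
    for c and P Q :: "int poly" and j
    by (simp add: of_nat_poly coeff_mult[of P Q] mult.assoc)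
  show ?thesis
    unfolding a_coeff_def using assms
    by (simp add: Pn_big[OF assms] m m2 coeff_sum m3)
qed

lemma a_zero_coeff: "a_coeff 0 n = 1"
  by (simp add: a_coeff_def Pn_coeff0)

lemma a_small: "n \<le> 3 \<Longrightarrow> a_coeff (Suc k) n = 0"
  by (simp add: a_coeff_def Pn_small)


abbreviation AA :: "nat \<Rightarrow> nat \<Rightarrow> rat" where "AA k n \<equiv> of_int (a_coeff k n)"

lemma alpha_nth: "alpha k $ j = (if 2 \<le> j then AA k (j+1) / fact j else 0)"
  by (simp add: alpha_def)

lemma alpha0: "alpha 0 = fps_exp 1 - 1 - fps_X"
proof (rule fps_ext)
  fix j show "alpha 0 $ j = (fps_exp 1 - 1 - fps_X) $ j"
    by (cases j; cases "j - 1") (auto simp: alpha_nth a_zero_coeff algebra_simps)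
qed

lemma prod_term:
  fixes a b m :: nat
  shows "(alpha a * fps_deriv (alpha b)) $ Suc (Suc m) =
     (\<Sum>i\<in>{2..Suc m}. of_nat (Suc (Suc m) choose i) / fact (Suc (Suc m)) *
                      (AA a (Suc i) * AA b (m + 4 - i)))"
proof -
  let ?j = "Suc (Suc m)"
  have "(alpha a * fps_deriv (alpha b)) $ ?j =
      (\<Sum>i=0..?j. alpha a $ i * (of_nat (?j - i + 1) * alpha b $ (?j - i + 1)))"
    unfolding fps_mult_nth fps_deriv_nth by (rule refl)
  also have "\<dots> = (\<Sum>i\<in>{2..Suc m}. alpha a $ i * (of_nat (?j - i + 1) * alpha b $ (?j - i + 1)))"
  proof (rule sum.mono_neutral_right)
    show "\<forall>i\<in>{0..?j} - {2..Suc m}. alpha a $ i * (of_nat (?j - i + 1) * alpha b $ (?j - i + 1)) = 0"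
    proof
      fix i assume "i \<in> {0..?j} - {2..Suc m}"
      then have "i < 2 \<or> i = ?j" by auto
      then show "alpha a $ i * (of_nat (?j - i + 1) * alpha b $ (?j - i + 1)) = 0"
        by (auto simp: alpha_nth)
    qed
  qed auto
  also have "\<dots> = (\<Sum>i\<in>{2..Suc m}. of_nat (?j choose i) / fact ?j * (AA a (Suc i) * AA b (m + 4 - i)))"
  proof (rule sum.cong[OF refl])
    fix i assume i: "i \<in> {2..Suc m}"
    then have i2: "2 \<le> i" "i \<le> Suc m" by auto
    have e1: "?j - i + 1 = Suc (?j - i)" by simp
    have e2: "?j - i + 1 + 1 = m + 4 - i" using i2 by simp
    have f: "fact (Suc (?j - i)) = (of_nat (Suc (?j - i)) * fact (?j - i) :: rat)" by simp
    have bf: "(of_nat (?j choose i) :: rat) = fact ?j / (fact i * fact (?j - i))"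
      using i2 by (intro binomial_fact) simp
    have "2 \<le> ?j - i + 1" using i2 by simp
    then show "alpha a $ i * (of_nat (?j - i + 1) * alpha b $ (?j - i + 1)) =
          of_nat (?j choose i) / fact ?j * (AA a (Suc i) * AA b (m + 4 - i))"
      using i2 unfolding alpha_nth bf
      apply (simp only: if_True e2)
      apply (simp add: e1 f del: fact_Suc)
      done
  qed
  finally show ?thesis .
qed


lemma sucfact: "of_nat (Suc n) * (x / fact (Suc n)) = (x / fact n :: rat)"
  by (simp add: divide_simps del: of_nat_Suc)

lemma alpha_ode:
  "fps_deriv (alpha (Suc k)) = alpha (Suc k) + alpha k + (\<Sum>a\<le>k. alpha a * fps_deriv (alpha (k-a)))"
proof (rule fps_ext)
  fix j
  show "fps_deriv (alpha (Suc k)) $ j = (alpha (Suc k) + alpha k + (\<Sum>a\<le>k. alpha a * fps_deriv (alpha (k-a)))) $ j"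
  proof (cases j)
    case 0 then show ?thesis by (simp add: alpha_nth fps_sum_nth fps_mult_nth)
  next
    case (Suc j1)
    show ?thesis
    proof (cases j1)
      case 0 then show ?thesis using Suc by (simp add: alpha_nth fps_sum_nth fps_mult_nth a_small)
    next
      case (Suc m)
      let ?j = "Suc (Suc m)"
      have jj: "j = ?j" using Suc \<open>j = Suc j1\<close> by simp
      have L: "fps_deriv (alpha (Suc k)) $ ?j = AA (Suc k) (Suc (Suc ?j)) / fact ?j"
      proof -
        have "fps_deriv (alpha (Suc k)) $ ?j = of_nat (Suc ?j) * (AA (Suc k) (Suc (Suc ?j)) / fact (Suc ?j))"
          unfolding fps_deriv_nth alpha_nth by simp
        also have "\<dots> = AA (Suc k) (Suc (Suc ?j)) / fact ?j"
          by (rule sucfact)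
        finally show ?thesis .
      qed
      have R: "(\<Sum>a\<le>k. alpha a * fps_deriv (alpha (k-a))) $ ?j =
         (\<Sum>i\<in>{2..Suc m}. of_nat (?j choose i) * (\<Sum>a\<le>k. AA a (Suc i) * AA (k-a) (m+4-i))) / fact ?j"
      proof -
        have "(\<Sum>a\<le>k. alpha a * fps_deriv (alpha (k-a))) $ ?j =
          (\<Sum>a\<le>k. \<Sum>i\<in>{2..Suc m}. of_nat (?j choose i) / fact ?j * (AA a (Suc i) * AA (k-a) (m + 4 - i)))"
          unfolding fps_sum_nth prod_term by (rule refl)
        also have "\<dots> = (\<Sum>i\<in>{2..Suc m}. \<Sum>a\<le>k. of_nat (?j choose i) / fact ?j * (AA a (Suc i) * AA (k-a) (m + 4 - i)))"
          by (rule sum.swap)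
        also have "\<dots> = (\<Sum>i\<in>{2..Suc m}. of_nat (?j choose i) * (\<Sum>a\<le>k. AA a (Suc i) * AA (k-a) (m+4-i)) / fact ?j)"
          by (simp only: sum_distrib_left[symmetric]) (simp add: field_simps)
        also have "\<dots> = (\<Sum>i\<in>{2..Suc m}. of_nat (?j choose i) * (\<Sum>a\<le>k. AA a (Suc i) * AA (k-a) (m+4-i))) / fact ?j"
          by (simp only: sum_divide_distrib)
        finally show ?thesis .
      qed
      have rec: "AA (Suc k) (Suc (Suc ?j)) = AA (Suc k) (Suc ?j) + AA k (Suc ?j) +
         (\<Sum>i\<in>{2..Suc m}. of_nat (?j choose i) * (\<Sum>a\<le>k. AA a (Suc i) * AA (k-a) (m+4-i)))"
      proof -
        have "a_coeff (Suc k) (m+4) = a_coeff (Suc k) (m+3) + a_coeff k (m+3) +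
          (\<Sum>i\<in>{3..m+2}. int ((m+2) choose (i-1)) * (\<Sum>a\<le>k. a_coeff a i * a_coeff (k-a) (m+5-i)))"
          using a_rec[of "m+4" k] by (simp add: eval_nat_numeral)
        also have "(\<Sum>i\<in>{3..m+2}. int ((m+2) choose (i-1)) * (\<Sum>a\<le>k. a_coeff a i * a_coeff (k-a) (m+5-i)))
            = (\<Sum>i\<in>{2..Suc m}. int ((m+2) choose i) * (\<Sum>a\<le>k. a_coeff a (Suc i) * a_coeff (k-a) (m+4-i)))"
        proof -
          have "{3..m+2} = {Suc 2..Suc (Suc m)}" by simp
          then show ?thesis by (simp only: sum.shift_bounds_cl_Suc_ivl) (simp add: ac_simps)
        qed
        finally show ?thesis by (simp add: eval_nat_numeral)
      qed
      show ?thesis unfolding jj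
        by (simp only: fps_add_nth L R rec) (simp add: alpha_nth add_divide_distrib)
    qed
  qed
qed


lemma alt_pascal:
  fixes f :: "nat \<Rightarrow> rat"
  shows "(\<Sum>k\<le>Suc n. (-1)^k * of_nat (Suc n choose k) * f k) =
         (\<Sum>k\<le>n. (-1)^k * of_nat (n choose k) * (f k - f (Suc k)))"
proof -
  have A: "(\<Sum>k\<le>Suc n. (-1)^k * of_nat (Suc n choose k) * f k) =
      f 0 + (\<Sum>k\<le>n. (-1)^Suc k * of_nat (Suc n choose Suc k) * f (Suc k))"
    by (subst sum.atMost_Suc_shift) simp
  have B: "(\<Sum>k\<le>n. (-1)^Suc k * of_nat (Suc n choose Suc k) * f (Suc k)) =
      (\<Sum>k\<le>n. - ((-1)^k * of_nat (n choose k) * f (Suc k))) +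
      (\<Sum>k\<le>n. (-1)^Suc k * of_nat (n choose Suc k) * f (Suc k))"
    by (simp add: sum.distrib[symmetric] algebra_simps)
  have C: "(\<Sum>k\<le>Suc n. (-1)^k * of_nat (n choose k) * f k) =
      f 0 + (\<Sum>k\<le>n. (-1)^Suc k * of_nat (n choose Suc k) * f (Suc k))"
    by (subst sum.atMost_Suc_shift) simp
  have D: "(\<Sum>k\<le>Suc n. (-1)^k * of_nat (n choose k) * f k) =
      (\<Sum>k\<le>n. (-1)^k * of_nat (n choose k) * f k)"
    by simp
  show ?thesis
    using A B C D by (simp add: sum_subtractf right_diff_distrib sum_negf)
qed

lemma fd_zero:
  "m < n \<Longrightarrow> (\<Sum>k\<le>n. (-1)^k * of_nat (n choose k) * (of_nat k + c)^m) = (0::rat)"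
proof (induction n arbitrary: m)
  case 0 then show ?case by simp
next
  case (Suc n)
  have e: "(of_nat k + c)^m - (of_nat (Suc k) + c)^m =
           - (\<Sum>i<m. of_nat (m choose i) * (of_nat k + c)^i)" for k
  proof -
    have "(of_nat (Suc k) + c)^m = ((of_nat k + c) + 1)^m" by (simp add: algebra_simps)
    also have "\<dots> = (\<Sum>i\<le>m. of_nat (m choose i) * (of_nat k + c)^i * 1^(m-i))"
      by (rule binomial_ring)
    also have "\<dots> = (\<Sum>i<m. of_nat (m choose i) * (of_nat k + c)^i) + (of_nat k + c)^m"
      by (simp add: lessThan_Suc_atMost[symmetric])
    finally show ?thesis by simp
  qed
  have "(\<Sum>k\<le>Suc n. (-1)^k * of_nat (Suc n choose k) * (of_nat k + c)^m) =
        (\<Sum>k\<le>n. (-1)^k * of_nat (n choose k) * ((of_nat k + c)^m - (of_nat (Suc k) + c)^m))"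
    by (rule alt_pascal)
  also have "\<dots> = - (\<Sum>i<m. of_nat (m choose i) *
                 (\<Sum>k\<le>n. (-1)^k * of_nat (n choose k) * (of_nat k + c)^i))"
  proof -
    have "(\<Sum>k\<le>n. (-1)^k * of_nat (n choose k) * ((of_nat k + c)^m - (of_nat (Suc k) + c)^m))
        = (\<Sum>k\<le>n. - (\<Sum>i<m. of_nat (m choose i) * ((-1)^k * of_nat (n choose k) * (of_nat k + c)^i)))"
      by (rule sum.cong[OF refl], subst e, simp add: sum_distrib_left algebra_simps)
    also have "\<dots> = - (\<Sum>i<m. \<Sum>k\<le>n. of_nat (m choose i) * ((-1)^k * of_nat (n choose k) * (of_nat k + c)^i))"
      by (simp add: sum_negf sum.swap[of _ "{..n}"])
    finally show ?thesis by (simp add: sum_distrib_left)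
  qed
  also have "\<dots> = 0"
    using Suc by (simp add: Suc.IH)
  finally show ?case .
qed


lemma pderiv_sum: "pderiv (sum f A) = (\<Sum>x\<in>A. pderiv (f x))"
  by (induction A rule: infinite_finite_induct) (simp_all add: pderiv_add)

lemma smult_sum_right: "smult c (sum f A) = (\<Sum>x\<in>A. smult c (f x))"
  by (induction A rule: infinite_finite_induct) (simp_all add: smult_add_right)

definition PA :: "nat \<Rightarrow> rat \<Rightarrow> rat poly" where
  "PA n s = (\<Sum>k\<le>n. smult (of_nat (n choose k) * (of_nat k + 1)^(k-1)) ([:s + of_nat (n-k), 1:]^(n-k)))"

lemma poly_eq_by_deriv:
  fixes p q :: "rat poly"
  assumes "pderiv p = pderiv q" "poly p y = poly q y"
  shows "p = q"
proof -
  have "pderiv (p - q) = 0" using assms by (simp add: pderiv_diff)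
  then have "degree (p - q) = 0" by (simp add: pderiv_eq_0_iff)
  then obtain c where c: "p - q = [:c:]" by (metis degree_eq_zeroE)
  then have "c = 0" using assms(2) by (metis add.right_neutral diff_self poly_0 poly_diff poly_pCons mult_zero_right)
  with c show ?thesis by simp
qed

lemma PA_deriv: "pderiv (PA (Suc m) s) = smult (of_nat (Suc m)) (PA m (s+1))"
proof -
  have "pderiv (PA (Suc m) s) = (\<Sum>k\<le>Suc m. smult (of_nat (Suc m choose k) * (of_nat k + 1)^(k-1))
           (smult (of_nat (Suc m - k)) ([:s + of_nat (Suc m-k), 1:]^(Suc m-k-1))))"
    unfolding PA_def pderiv_sum
    by (rule sum.cong[OF refl]) (simp only: pderiv_smult pderiv_power pderiv_pCons pderiv_singleton, simp)
  also have "\<dots> = (\<Sum>k\<le>m. smult (of_nat (Suc m choose k) * (of_nat k + 1)^(k-1))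
           (smult (of_nat (Suc m - k)) ([:s + of_nat (Suc m-k), 1:]^(Suc m-k-1))))"
    by simp
  also have "\<dots> = (\<Sum>k\<le>m. smult (of_nat (Suc m)) (smult (of_nat (m choose k) * (of_nat k + 1)^(k-1))
           ([:(s+1) + of_nat (m-k), 1:]^(m-k))))"
  proof (rule sum.cong[OF refl])
    fix k assume "k \<in> {..m}"
    then have km: "k \<le> m" by simp
    have b: "of_nat (Suc m - k) * of_nat (Suc m choose k) = (of_nat (Suc m) * of_nat (m choose k) :: rat)"
      using binomial_absorb_comp[of "Suc m" k] by (metis diff_Suc_1 of_nat_mult)
    have c: "s + of_nat (Suc m - k) = (s+1) + of_nat (m-k)" using km by (simp add: Suc_diff_le)
    have d: "Suc m - k - 1 = m - k" using km by simp
    show "smult (of_nat (Suc m choose k) * (of_nat k + 1)^(k-1))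
           (smult (of_nat (Suc m - k)) ([:s + of_nat (Suc m-k), 1:]^(Suc m-k-1))) =
          smult (of_nat (Suc m)) (smult (of_nat (m choose k) * (of_nat k + 1)^(k-1))
           ([:(s+1) + of_nat (m-k), 1:]^(m-k)))"
    proof -
      have "of_nat (Suc m choose k) * (of_nat k + 1)^(k-1) * of_nat (Suc m - k) =
            of_nat (Suc m) * (of_nat (m choose k) * (of_nat k + 1 :: rat)^(k-1))"
      proof -
        have "of_nat (Suc m choose k) * (of_nat k + 1)^(k-1) * of_nat (Suc m - k) =
            (of_nat (Suc m - k) * of_nat (Suc m choose k)) * (of_nat k + 1 :: rat)^(k-1)"
          by (simp only: ac_simps)
        also have "\<dots> = (of_nat (Suc m) * of_nat (m choose k)) * (of_nat k + 1 :: rat)^(k-1)"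
          by (simp only: b)
        finally show ?thesis by (simp only: ac_simps)
      qed
      then show ?thesis unfolding c d smult_smult by (simp only:)
    qed
  qed
  also have "\<dots> = smult (of_nat (Suc m)) (PA m (s+1))"
    unfolding PA_def by (simp add: smult_sum_right)
  finally show ?thesis .
qed

lemma PA_closed: "PA n s = [:s + of_nat n + 1, 1:]^n"
proof (induction n arbitrary: s)
  case 0 then show ?case by (simp add: PA_def)
next
  case (Suc m)
  show ?case
  proof (rule poly_eq_by_deriv[where y = "- (s + of_nat (Suc m) + 1)"])
    show "pderiv (PA (Suc m) s) = pderiv ([:s + of_nat (Suc m) + 1, 1:] ^ Suc m)"
    proof -
      have "pderiv ([:s + of_nat (Suc m) + 1, 1:] ^ Suc m) = smult (of_nat (Suc m)) ([:s + of_nat (Suc m) + 1, 1:] ^ m)"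
        by (simp only: pderiv_power_Suc pderiv_pCons pderiv_singleton) simp
      moreover have "s + 1 + of_nat m + 1 = s + of_nat (Suc m) + 1" by simp
      ultimately show ?thesis by (simp only: PA_deriv Suc.IH)
    qed
    have "poly (PA (Suc m) s) (- (s + of_nat (Suc m) + 1)) =
       (\<Sum>k\<le>Suc m. of_nat (Suc m choose k) * (of_nat k + 1)^(k-1) * (- (of_nat k + 1))^(Suc m - k))"
      unfolding PA_def poly_sum
      by (rule sum.cong[OF refl]) (auto simp: of_nat_diff algebra_simps)
    also have "\<dots> = (-1)^(Suc m) * (\<Sum>k\<le>Suc m. (-1)^k * of_nat (Suc m choose k) * (of_nat k + 1)^m)"
      unfolding sum_distrib_left
    proof (rule sum.cong[OF refl])
      fix k assume "k \<in> {..Suc m}"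
      then have km: "k \<le> Suc m" by simp
      have p1: "(of_nat k + 1 :: rat)^(k-1) * (of_nat k + 1)^(Suc m - k) = (of_nat k + 1)^m"
      proof (cases k)
        case 0 then show ?thesis by simp
      next
        case (Suc k0)
        have "(of_nat k + 1 :: rat)^(k-1) * (of_nat k + 1)^(Suc m - k) = (of_nat k + 1)^(k - 1 + (Suc m - k))"
          by (rule power_add[symmetric])
        also have "k - 1 + (Suc m - k) = m" using km Suc by simp
        finally show ?thesis .
      qed
      have p2: "(- (of_nat k + 1 :: rat))^(Suc m - k) = (-1)^(Suc m - k) * (of_nat k + 1)^(Suc m - k)"
        by (rule power_minus)
      have p3: "(-1::rat)^(Suc m - k) = (-1)^(Suc m) * (-1)^k"
      proof -
        have sq: "(-1::rat)^k * (-1)^k = 1"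
        proof -
          have "(-1::rat)^k * (-1)^k = ((-1) * (-1))^k" by (rule power_mult_distrib[symmetric])
          then show ?thesis by simp
        qed
        have s: "(-1::rat)^(Suc m - k) * (-1)^k = (-1)^(Suc m)"
        proof -
          have "(-1::rat)^(Suc m - k) * (-1)^k = (-1)^(Suc m - k + k)" by (rule power_add[symmetric])
          also have "Suc m - k + k = Suc m" using km by simp
          finally show ?thesis .
        qed
        have "(-1::rat)^(Suc m - k) = (-1)^(Suc m - k) * ((-1)^k * (-1)^k)" by (simp only: sq mult_1_right)
        also have "\<dots> = ((-1)^(Suc m - k) * (-1)^k) * (-1)^k" by (simp only: mult.assoc)
        finally show ?thesis by (simp only: s)
      qed
      show "of_nat (Suc m choose k) * (of_nat k + 1)^(k-1) * (- (of_nat k + 1))^(Suc m - k) =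
            (-1)^(Suc m) * ((-1)^k * of_nat (Suc m choose k) * (of_nat k + 1 :: rat)^m)"
      proof -
        define x where "x = (of_nat k + 1 :: rat)"
        have q1: "x^(k-1) * x^(Suc m - k) = x^m" using p1 unfolding x_def .
        have q2: "(- x)^(Suc m - k) = (-1)^(Suc m - k) * x^(Suc m - k)" by (rule power_minus)
        have "of_nat (Suc m choose k) * x^(k-1) * (- x)^(Suc m - k) =
              (-1)^(Suc m) * ((-1)^k * of_nat (Suc m choose k) * x^m)"
          unfolding q2 p3 q1[symmetric] by (simp only: ac_simps)
        then show ?thesis unfolding x_def .
      qed
    qed
    also have "\<dots> = 0" using fd_zero[of m "Suc m" 1] by (simp add: add.commute)
    finally show "poly (PA (Suc m) s) (- (s + of_nat (Suc m) + 1)) =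
        poly ([:s + of_nat (Suc m) + 1, 1:] ^ Suc m) (- (s + of_nat (Suc m) + 1))" by (simp add: poly_power del: power_Suc)
  qed
qed

lemma abel:
  "(\<Sum>k\<le>n. of_nat (n choose k) * (of_nat k + 1)^(k-1) * (of_nat (n-k) + 1)^(n-k)) = (of_nat n + 2 :: rat)^n"
proof -
  have "poly (PA n 1) 0 = poly ([:1 + of_nat n + 1, 1:]^n) 0" by (simp add: PA_closed)
  then show ?thesis unfolding PA_def poly_sum by (simp add: algebra_simps)
qed


definition ev :: "rat poly poly \<Rightarrow> rat fps" where
  "ev P = (\<Sum>j\<le>degree P. fps_of_poly (coeff P j) * fps_exp (of_nat j))"

lemma ev_bound:
  assumes "degree P \<le> N"
  shows "ev P = (\<Sum>j\<le>N. fps_of_poly (coeff P j) * fps_exp (of_nat j))"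
  unfolding ev_def
  by (rule sum.mono_neutral_left) (use assms in \<open>auto simp: coeff_eq_0\<close>)

lemma ev_0 [simp]: "ev 0 = 0"
  by (simp add: ev_def)

lemma ev_add: "ev (P + Q) = ev P + ev Q"
proof -
  let ?N = "max (degree P) (degree Q)"
  have "degree (P + Q) \<le> ?N" by (rule degree_add_le) auto
  then show ?thesis
    by (simp add: ev_bound[of _ ?N] sum.distrib fps_of_poly_add distrib_right)
qed

lemma ev_minus: "ev (- P) = - ev P"
  by (simp add: ev_def fps_of_poly_simps sum_negf)

lemma ev_diff: "ev (P - Q) = ev P - ev Q"
  using ev_add[of P "- Q"] by (simp add: ev_minus)

lemma ev_sum: "ev (sum f A) = (\<Sum>x\<in>A. ev (f x))"
  by (induction A rule: infinite_finite_induct) (simp_all add: ev_add)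

lemma ev_smult: "ev (smult a Q) = fps_of_poly a * ev Q"
proof -
  have "degree (smult a Q) \<le> degree Q" by simp
  then show ?thesis
    by (simp add: ev_bound[of _ "degree Q"] ev_def sum_distrib_left fps_of_poly_mult mult.assoc)
qed

lemma ev_pCons: "ev (pCons a P) = fps_of_poly a + fps_exp 1 * ev P"
proof -
  have d: "degree (pCons a P) \<le> Suc (degree P)" by (simp add: degree_pCons_le)
  have "ev (pCons a P) = (\<Sum>j\<le>Suc (degree P). fps_of_poly (coeff (pCons a P) j) * fps_exp (of_nat j))"
    by (rule ev_bound[OF d])
  also have "\<dots> = fps_of_poly a + (\<Sum>j\<le>degree P. fps_of_poly (coeff P j) * fps_exp (of_nat (Suc j)))"
    by (subst sum.atMost_Suc_shift) simp
  also have "(\<Sum>j\<le>degree P. fps_of_poly (coeff P j) * fps_exp (of_nat (Suc j))) = fps_exp 1 * ev P"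
    unfolding ev_def sum_distrib_left
    by (rule sum.cong[OF refl]) (simp add: fps_exp_add_mult[symmetric] add.commute mult.left_commute)
  finally show ?thesis .
qed

lemma ev_mult: "ev (P * Q) = ev P * ev Q"
proof (induction P)
  case 0 then show ?case by simp
next
  case (pCons a P)
  have "ev (pCons a P * Q) = ev (smult a Q + pCons 0 (P * Q))" by simp
  also have "\<dots> = fps_of_poly a * ev Q + fps_exp 1 * ev (P * Q)"
    by (simp add: ev_add ev_smult ev_pCons)
  also have "\<dots> = ev (pCons a P) * ev Q"
    by (simp add: pCons.IH ev_pCons algebra_simps)
  finally show ?case .
qed

definition Dp :: "rat poly poly \<Rightarrow> rat poly poly" where
  "Dp P = (\<Sum>j\<le>degree P. monom (pderiv (coeff P j) + smult (of_nat j) (coeff P j)) j)"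

lemma coeff_Dp: "coeff (Dp P) j = pderiv (coeff P j) + smult (of_nat j) (coeff P j)"
proof (cases "j \<le> degree P")
  case True
  then show ?thesis unfolding Dp_def coeff_sum coeff_monom
    by (simp add: sum.delta)
next
  case False
  then have "coeff P j = 0" by (simp add: coeff_eq_0)
  then show ?thesis using False unfolding Dp_def coeff_sum coeff_monom
    by (simp add: sum.delta)
qed

lemma degree_Dp: "degree (Dp P) \<le> degree P"
  by (rule degree_le) (simp add: coeff_Dp coeff_eq_0)

lemma ev_Dp: "fps_deriv (ev P) = ev (Dp P)"
proof -
  have "fps_deriv (ev P) = (\<Sum>j\<le>degree P. fps_deriv (fps_of_poly (coeff P j) * fps_exp (of_nat j)))"
    unfolding ev_def by (simp add: fps_deriv_sum)
  also have "\<dots> = (\<Sum>j\<le>degree P. fps_of_poly (coeff (Dp P) j) * fps_exp (of_nat j))"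
    by (rule sum.cong[OF refl])
       (simp add: coeff_Dp fps_of_poly_add fps_of_poly_smult fps_of_poly_pderiv algebra_simps)
  also have "\<dots> = ev (Dp P)"
    by (rule ev_bound[symmetric, OF degree_Dp])
  finally show ?thesis .
qed

lemma ev_nth0: "ev P $ 0 = (\<Sum>j\<le>degree P. coeff (coeff P j) 0)"
  unfolding ev_def fps_sum_nth by simp

lemma ev_nth0_bound: "degree P \<le> N \<Longrightarrow> ev P $ 0 = (\<Sum>j\<le>N. coeff (coeff P j) 0)"
  unfolding ev_bound fps_sum_nth by (simp add: ev_bound)

lemma fps_ode_unique:
  fixes f h g :: "rat fps"
  assumes "fps_deriv f = f + g" "fps_deriv h = h + g" "f $ 0 = h $ 0"
  shows "f = h"
proof -
  let ?w = "f - h"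
  have dw: "fps_deriv ?w = ?w" using assms(1,2) by simp
  have "?w $ n = 0" for n
  proof (induction n)
    case 0 then show ?case using assms(3) by simp
  next
    case (Suc n)
    have "fps_deriv ?w $ n = ?w $ n" using dw by simp
    then have "of_nat (Suc n) * ?w $ Suc n = 0" using Suc by simp
    then show ?case by simp
  qed
  then show ?thesis by (metis (no_types) diff_eq_eq fps_ext fps_zero_nth add_0)
qed


lemma lower_deg:
  fixes r :: "rat poly"
  assumes "degree r \<le> d" "coeff r d = 0"
  shows "r = 0 \<or> degree r < d"
  using assms by (metis le_neq_implies_less leading_coeff_0_iff)

lemma solve_lin:
  fixes r :: "rat poly"
  assumes c: "c \<noteq> 0"
  shows "\<exists>q. pderiv q + smult c q = r \<and> degree q \<le> degree r \<and> coeff q (degree r) = lead_coeff r / c"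
  using c
proof (induction "degree r" arbitrary: r rule: less_induct)
  case less
  show ?case
  proof (cases "r = 0")
    case True then show ?thesis by (intro exI[of _ 0]) simp
  next
    case False
    define d where "d = degree r"
    define L where "L = lead_coeff r"
    define q0 where "q0 = monom (L / c) d"
    define r' where "r' = r - (pderiv q0 + smult c q0)"
    have dq0: "degree q0 \<le> d" unfolding q0_def by (rule degree_monom_le)
    have dpq0: "degree (pderiv q0) \<le> d" using dq0 by (simp add: degree_pderiv)
    have dr': "degree r' \<le> d" unfolding r'_def d_def
      by (intro degree_diff_le degree_add_le) (use dpq0 dq0 d_def in auto)
    have cpq0: "coeff (pderiv q0) d = 0"
      unfolding coeff_pderiv q0_def coeff_monom by simp
    have cr': "coeff r' d = 0" unfolding r'_def coeff_diff coeff_add coeff_smult cpq0 using less.prems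
      by (simp add: q0_def L_def d_def)
    obtain q1 where q1: "pderiv q1 + smult c q1 = r'" "degree q1 \<le> d" "coeff q1 d = 0"
    proof (cases "r' = 0")
      case True then show ?thesis using that[of 0] by simp
    next
      case False
      then have lt: "degree r' < d" using lower_deg[OF dr' cr'] by simp
      then obtain q1 where "pderiv q1 + smult c q1 = r'" "degree q1 \<le> degree r'"
        using less.hyps[of r'] less.prems d_def by blast
      then show ?thesis using that[of q1] lt by (simp add: coeff_eq_0)
    qed
    show ?thesis
    proof (intro exI[of _ "q0 + q1"] conjI)
      show "pderiv (q0 + q1) + smult c (q0 + q1) = r"
        using q1(1) unfolding r'_def by (simp add: pderiv_add smult_add_right algebra_simps)
      show "degree (q0 + q1) \<le> degree r" using dq0 q1(2) d_def by (simp add: degree_add_le)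
      show "coeff (q0 + q1) (degree r) = lead_coeff r / c"
        using q1(3) by (simp add: q0_def d_def L_def)
    qed
  qed
qed

lemma antideriv:
  fixes r :: "rat poly"
  shows "\<exists>q. pderiv q = r \<and> degree q \<le> Suc (degree r) \<and>
             coeff q (Suc (degree r)) = lead_coeff r / of_nat (Suc (degree r))"
proof (induction "degree r" arbitrary: r rule: less_induct)
  case less
  show ?case
  proof (cases "r = 0")
    case True then show ?thesis by (intro exI[of _ 0]) simp
  next
    case False
    define d where "d = degree r"
    define L where "L = lead_coeff r"
    define q0 where "q0 = monom (L / of_nat (Suc d)) (Suc d)"
    define r' where "r' = r - pderiv q0"
    have dq0: "degree q0 \<le> Suc d" unfolding q0_def by (rule degree_monom_le)
    have pq0: "pderiv q0 = monom L d"
      unfolding q0_def pderiv_monom by (simp del: of_nat_Suc)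
    have dr': "degree r' \<le> d" unfolding r'_def pq0 d_def
      by (intro degree_diff_le) (auto intro: order.trans[OF degree_monom_le])
    have cr': "coeff r' d = 0" unfolding r'_def pq0
      by (simp add: L_def d_def)
    obtain q1 where q1: "pderiv q1 = r'" "degree q1 \<le> d"
    proof (cases "r' = 0")
      case True then show ?thesis using that[of 0] by simp
    next
      case False
      then have lt: "degree r' < d" using lower_deg[OF dr' cr'] by simp
      then obtain q1 where "pderiv q1 = r'" "degree q1 \<le> Suc (degree r')"
        using less.hyps[of r'] d_def by blast
      then show ?thesis using that[of q1] lt by simp
    qed
    show ?thesis
    proof (intro exI[of _ "q0 + q1"] conjI)
      show "pderiv (q0 + q1) = r"
        using q1(1) unfolding r'_def by (simp add: pderiv_add)
      show "degree (q0 + q1) \<le> Suc (degree r)" using dq0 q1(2) d_def by (simp add: degree_add_le)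
      have "coeff q1 (Suc d) = 0" using q1(2) by (simp add: coeff_eq_0)
      then show "coeff (q0 + q1) (Suc (degree r)) = lead_coeff r / of_nat (Suc (degree r))"
        by (simp add: q0_def d_def L_def del: of_nat_Suc)
    qed
  qed
qed


definition nn :: "nat \<Rightarrow> rat \<Rightarrow> rat poly \<Rightarrow> bool" where
  "nn d s p \<longleftrightarrow> degree p \<le> d \<and> 0 \<le> s * coeff p d"

definition st :: "nat \<Rightarrow> rat \<Rightarrow> rat poly \<Rightarrow> bool" where
  "st d s p \<longleftrightarrow> degree p \<le> d \<and> 0 < s * coeff p d"

lemma st_nn: "st d s p \<Longrightarrow> nn d s p"
  by (auto simp: st_def nn_def)

lemma st_degree: "st d s p \<Longrightarrow> degree p = d"
  unfolding st_def by (metis le_antisym le_degree mult_zero_right order_less_irrefl)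

lemma st_lc: "st d s p \<Longrightarrow> 0 < s * lead_coeff p"
  using st_degree[of d s p] by (auto simp: st_def)

lemma nn_zero [simp]: "nn d s 0"
  by (simp add: nn_def)

lemma nn_low: "degree p < d \<Longrightarrow> nn d s p"
  by (simp add: nn_def coeff_eq_0)

lemma nn_add: "nn d s p \<Longrightarrow> nn d s q \<Longrightarrow> nn d s (p + q)"
  by (auto simp: nn_def degree_add_le distrib_left)

lemma st_add: "st d s p \<Longrightarrow> nn d s q \<Longrightarrow> st d s (p + q)"
  by (auto simp: nn_def st_def degree_add_le distrib_left)

lemma nn_sum: "(\<And>x. x \<in> A \<Longrightarrow> nn d s (f x)) \<Longrightarrow> nn d s (sum f A)"
  by (induction A rule: infinite_finite_induct) (simp_all add: nn_add)

lemma st_sum: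
  assumes "finite A" "a \<in> A" "st d s (f a)" "\<And>x. x \<in> A \<Longrightarrow> nn d s (f x)"
  shows "st d s (sum f A)"
proof -
  have "sum f A = f a + sum f (A - {a})" using assms(1,2) by (simp add: sum.remove)
  moreover have "nn d s (sum f (A - {a}))" using assms(4) by (intro nn_sum) auto
  ultimately show ?thesis using st_add assms(3) by simp
qed

lemma coeff_mult_bound:
  fixes p q :: "rat poly"
  assumes "degree p \<le> d1" "degree q \<le> d2"
  shows "coeff (p * q) (d1 + d2) = coeff p d1 * coeff q d2"
proof (cases "degree p = d1 \<and> degree q = d2")
  case True then show ?thesis using coeff_mult_degree_sum[of p q] by simp
next
  case False
  then have "degree (p * q) < d1 + d2" using assms degree_mult_le[of p q] by linarith
  moreover have "coeff p d1 = 0 \<or> coeff q d2 = 0" using False assms by (auto simp: coeff_eq_0)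
  ultimately show ?thesis by (auto simp: coeff_eq_0)
qed

lemma nn_mult: "nn d1 s1 p \<Longrightarrow> nn d2 s2 q \<Longrightarrow> nn (d1 + d2) (s1 * s2) (p * q)"
  unfolding nn_def
proof (elim conjE, intro conjI)
  assume a: "degree p \<le> d1" "0 \<le> s1 * coeff p d1" "degree q \<le> d2" "0 \<le> s2 * coeff q d2"
  show "degree (p * q) \<le> d1 + d2" using a degree_mult_le[of p q] by linarith
  have eq: "s1 * s2 * coeff (p * q) (d1 + d2) = (s1 * coeff p d1) * (s2 * coeff q d2)"
    by (simp only: coeff_mult_bound[OF a(1) a(3)]) (simp add: algebra_simps)
  show "0 \<le> s1 * s2 * coeff (p * q) (d1 + d2)" unfolding eq using a by simp
qed

lemma st_mult: "st d1 s1 p \<Longrightarrow> st d2 s2 q \<Longrightarrow> st (d1 + d2) (s1 * s2) (p * q)"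
  unfolding st_def
proof (elim conjE, intro conjI)
  assume a: "degree p \<le> d1" "0 < s1 * coeff p d1" "degree q \<le> d2" "0 < s2 * coeff q d2"
  show "degree (p * q) \<le> d1 + d2" using a degree_mult_le[of p q] by linarith
  have eq: "s1 * s2 * coeff (p * q) (d1 + d2) = (s1 * coeff p d1) * (s2 * coeff q d2)"
    by (simp only: coeff_mult_bound[OF a(1) a(3)]) (simp add: algebra_simps)
  show "0 < s1 * s2 * coeff (p * q) (d1 + d2)" unfolding eq using a by simp
qed

lemma coeff_pderiv_top: "degree (p :: rat poly) \<le> d \<Longrightarrow> coeff (pderiv p) d = 0"
  by (simp add: coeff_pderiv coeff_eq_0)

lemma degree_pderiv_le: "degree (p :: rat poly) \<le> d \<Longrightarrow> degree (pderiv p) \<le> d"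
  using degree_pderiv[of p] by linarith

lemma nn_Dc: "nn d s p \<Longrightarrow> 0 \<le> c \<Longrightarrow> nn d s (pderiv p + smult c p)"
  unfolding nn_def
proof (elim conjE, intro conjI)
  assume a: "degree p \<le> d" "0 \<le> s * coeff p d" "0 \<le> c"
  show "degree (pderiv p + smult c p) \<le> d"
    using a by (intro degree_add_le degree_pderiv_le) auto
  have eq: "s * coeff (pderiv p + smult c p) d = c * (s * coeff p d)"
    by (simp only: coeff_add coeff_smult coeff_pderiv_top[OF a(1)]) (simp add: algebra_simps)
  show "0 \<le> s * coeff (pderiv p + smult c p) d" unfolding eq using a by simp
qed

lemma st_Dc: "st d s p \<Longrightarrow> 0 < c \<Longrightarrow> st d s (pderiv p + smult c p)"
  unfolding st_def
proof (elim conjE, intro conjI)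
  assume a: "degree p \<le> d" "0 < s * coeff p d" "0 < c"
  show "degree (pderiv p + smult c p) \<le> d"
    using a by (intro degree_add_le degree_pderiv_le) auto
  have eq: "s * coeff (pderiv p + smult c p) d = c * (s * coeff p d)"
    by (simp only: coeff_add coeff_smult coeff_pderiv_top[OF a(1)]) (simp add: algebra_simps)
  show "0 < s * coeff (pderiv p + smult c p) d" unfolding eq using a by simp
qed

lemma nn_pderiv: "degree p \<le> d \<Longrightarrow> nn d s (pderiv p)"
  unfolding nn_def by (simp add: degree_pderiv_le coeff_pderiv_top)


definition cc :: "nat \<Rightarrow> rat" where "cc a = (of_nat a + 1)^(a-1) / fact a"

definition Inv :: "nat \<Rightarrow> rat poly poly \<Rightarrow> bool" where
  "Inv a Y \<longleftrightarrow> (\<forall>j>Suc a. coeff Y j = 0) \<and>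
     (\<forall>j\<le>Suc a. nn (2*(Suc a - j)) ((-1)^(Suc a - j)) (coeff Y j)) \<and>
     (\<forall>j\<in>{1..Suc a}. st (2*(Suc a - j)) ((-1)^(Suc a - j)) (coeff Y j)) \<and>
     coeff Y (Suc a) = [:cc a:] \<and>
     coeff Y 0 = (if a = 0 then [:-1,-1:] else 0)"

lemma Inv_nn: "Inv a Y \<Longrightarrow> j \<le> Suc a \<Longrightarrow> nn (2*(Suc a - j)) ((-1)^(Suc a - j)) (coeff Y j)"
  unfolding Inv_def by blast
lemma Inv_st: "Inv a Y \<Longrightarrow> 1 \<le> j \<Longrightarrow> j \<le> Suc a \<Longrightarrow> st (2*(Suc a - j)) ((-1)^(Suc a - j)) (coeff Y j)"
  unfolding Inv_def by auto
lemma Inv_big: "Inv a Y \<Longrightarrow> Suc a < j \<Longrightarrow> coeff Y j = 0"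
  unfolding Inv_def by blast
lemma Inv_top: "Inv a Y \<Longrightarrow> coeff Y (Suc a) = [:cc a:]"
  unfolding Inv_def by blast
lemma Inv_0: "Inv a Y \<Longrightarrow> coeff Y 0 = (if a = 0 then [:-1,-1:] else 0)"
  unfolding Inv_def by blast

lemma nn_cong: "nn d s p \<Longrightarrow> d = d' \<Longrightarrow> s = s' \<Longrightarrow> nn d' s' p" by simp
lemma st_cong: "st d s p \<Longrightarrow> d = d' \<Longrightarrow> s = s' \<Longrightarrow> st d' s' p" by simp

lemma cc_pos: "cc a > 0" by (simp add: cc_def)

lemma Inv_D:
  assumes "Inv b Y"
  shows "j > Suc b \<Longrightarrow> coeff (Dp Y) j = 0"
    and "j \<le> Suc b \<Longrightarrow> nn (2*(Suc b - j)) ((-1)^(Suc b - j)) (coeff (Dp Y) j)"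
    and "j \<in> {1..Suc b} \<Longrightarrow> st (2*(Suc b - j)) ((-1)^(Suc b - j)) (coeff (Dp Y) j)"
    and "coeff (Dp Y) (Suc b) = [:of_nat (Suc b) * cc b:]"
    and "coeff (Dp Y) 0 = (if b = 0 then [:-1:] else 0)"
proof -
  note I = assms[unfolded Inv_def]
  show "j > Suc b \<Longrightarrow> coeff (Dp Y) j = 0" using I by (simp add: coeff_Dp)
  show "j \<le> Suc b \<Longrightarrow> nn (2*(Suc b - j)) ((-1)^(Suc b - j)) (coeff (Dp Y) j)"
  proof -
    assume j: "j \<le> Suc b"
    have n: "nn (2*(Suc b - j)) ((-1)^(Suc b - j)) (coeff Y j)" using I j by blast
    show ?thesis unfolding coeff_Dp by (rule nn_Dc[OF n]) simp
  qed
  show "j \<in> {1..Suc b} \<Longrightarrow> st (2*(Suc b - j)) ((-1)^(Suc b - j)) (coeff (Dp Y) j)"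
  proof -
    assume j: "j \<in> {1..Suc b}"
    have n: "st (2*(Suc b - j)) ((-1)^(Suc b - j)) (coeff Y j)" using I j by blast
    show ?thesis unfolding coeff_Dp by (rule st_Dc[OF n]) (use j in simp)
  qed
  show "coeff (Dp Y) (Suc b) = [:of_nat (Suc b) * cc b:]"
    using I by (simp add: coeff_Dp)
  show "coeff (Dp Y) 0 = (if b = 0 then [:-1:] else 0)"
    using I by (simp add: coeff_Dp pderiv_pCons)
qed

lemma term_nn:
  assumes Y: "Inv a Y" and Z: "Inv b Z" and j: "j \<le> a + b + 2" and i: "i \<le> j"
  shows "nn (2*(a+b+2-j)) ((-1)^(a+b+2-j)) (coeff Y i * coeff (Dp Z) (j - i))"
proof (cases "i \<le> Suc a \<and> j - i \<le> Suc b")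
  case True
  have n1: "nn (2*(Suc a - i)) ((-1)^(Suc a - i)) (coeff Y i)"
    using Y True unfolding Inv_def by blast
  have n2: "nn (2*(Suc b - (j-i))) ((-1)^(Suc b - (j-i))) (coeff (Dp Z) (j-i))"
    using Inv_D(2)[OF Z] True by blast
  have e: "Suc a - i + (Suc b - (j - i)) = a + b + 2 - j" using True i by auto
  have e2: "2 * (Suc a - i) + 2 * (Suc b - (j - i)) = 2 * (a + b + 2 - j)" using e by simp
  have e3: "(-1::rat) ^ (Suc a - i) * (-1) ^ (Suc b - (j - i)) = (-1) ^ (a + b + 2 - j)"
    unfolding e[symmetric] by (rule power_add[symmetric])
  show ?thesis
    by (rule nn_cong[OF nn_mult[OF n1 n2] e2 e3])
next
  case False
  have "coeff Y i = 0 \<or> coeff (Dp Z) (j - i) = 0"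
  proof (cases "i \<le> Suc a")
    case True
    then have "j - i > Suc b" using False by auto
    then show ?thesis using Inv_D(1)[OF Z] by auto
  next
    case False
    then show ?thesis using Y unfolding Inv_def by auto
  qed
  then show ?thesis by auto
qed

lemma prod_nn:
  assumes Y: "Inv a Y" and Z: "Inv b Z" and j: "j \<le> a + b + 2"
  shows "nn (2*(a+b+2-j)) ((-1)^(a+b+2-j)) (coeff (Y * Dp Z) j)"
  unfolding coeff_mult by (rule nn_sum) (use term_nn[OF Y Z j] in auto)

lemma prod_st:
  assumes Y: "Inv 0 Y" and Z: "Inv b Z" and j: "2 \<le> j" "j \<le> b + 2"
  shows "st (2*(b+2-j)) ((-1)^(b+2-j)) (coeff (Y * Dp Z) j)"
  unfolding coeff_mult
proof (rule st_sum[where a = 1])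
  show "1 \<in> {..j}" using j by simp
  have n1: "st (2*(Suc 0 - 1)) ((-1)^(Suc 0 - 1)) (coeff Y 1)"
    using Inv_st[OF Y, of 1] by simp
  have n2: "st (2*(Suc b - (j-1))) ((-1)^(Suc b - (j-1))) (coeff (Dp Z) (j-1))"
    by (rule Inv_D(3)[OF Z]) (use j in auto)
  have e: "Suc b - (j - Suc 0) = Suc (Suc b) - j" using j by arith
  show "st (2*(b+2-j)) ((-1)^(b+2-j)) (coeff Y 1 * coeff (Dp Z) (j - 1))"
    by (rule st_cong[OF st_mult[OF n1 n2]]) (simp_all add: e)
  fix i assume "i \<in> {..j}"
  then show "nn (2*(b+2-j)) ((-1)^(b+2-j)) (coeff Y i * coeff (Dp Z) (j - i))"
  proof -
    have j0: "j \<le> 0 + b + 2" using j by simp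
    have "i \<le> j" using \<open>i \<in> {..j}\<close> by simp
    from term_nn[OF Y Z j0 this] show ?thesis by (simp only: add_0)
  qed
qed simp


lemma sum_const_poly: "(\<Sum>a\<in>A. [:f a:]) = [:\<Sum>a\<in>A. f a:]"
  by (induction A rule: infinite_finite_induct) simp_all

definition RR :: "(nat \<Rightarrow> rat poly poly) \<Rightarrow> nat \<Rightarrow> rat poly poly" where
  "RR Yf k' = Yf k' + (\<Sum>a\<le>k'. Yf a * Dp (Yf (k'-a)))"

lemma coeff_RR: "coeff (RR Yf k') j = coeff (Yf k') j + (\<Sum>a\<le>k'. coeff (Yf a * Dp (Yf (k'-a))) j)"
  by (simp add: RR_def coeff_sum)

lemma prod_big:
  assumes Y: "Inv a Y" and Z: "Inv b Z" and j: "a + b + 2 < j"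
  shows "coeff (Y * Dp Z) j = 0"
  unfolding coeff_mult
proof (rule sum.neutral, rule ballI)
  fix i assume "i \<in> {..j}"
  show "coeff Y i * coeff (Dp Z) (j - i) = 0"
  proof (cases "i \<le> Suc a")
    case True
    then have "Suc b < j - i" using j by arith
    then show ?thesis using Inv_D(1)[OF Z] by simp
  next
    case False then show ?thesis using Inv_big[OF Y] by simp
  qed
qed

lemma prod_top:
  assumes Y: "Inv a Y" and Z: "Inv b Z"
  shows "coeff (Y * Dp Z) (a + b + 2) = [:cc a * (of_nat (Suc b) * cc b):]"
proof -
  have "coeff (Y * Dp Z) (a + b + 2) =
        (\<Sum>i\<le>a+b+2. if i = Suc a then coeff Y (Suc a) * coeff (Dp Z) (Suc b) else 0)"
    unfolding coeff_mult
  proof (rule sum.cong[OF refl])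
    fix i assume i: "i \<in> {..a+b+2}"
    show "coeff Y i * coeff (Dp Z) (a + b + 2 - i) =
          (if i = Suc a then coeff Y (Suc a) * coeff (Dp Z) (Suc b) else 0)"
    proof (cases "i = Suc a")
      case True then show ?thesis by simp
    next
      case False
      show ?thesis
      proof (cases "i < Suc a")
        case True
        then have "Suc b < a + b + 2 - i" by arith
        then show ?thesis using Inv_D(1)[OF Z] False by simp
      next
        case False2: False
        then have "Suc a < i" using False by arith
        then show ?thesis using Inv_big[OF Y] False by simp
      qed
    qed
  qed
  also have "\<dots> = coeff Y (Suc a) * coeff (Dp Z) (Suc b)"
    by (simp add: sum.delta)
  also have "\<dots> = [:cc a * (of_nat (Suc b) * cc b):]"
    by (simp add: Inv_top[OF Y] Inv_D(4)[OF Z])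
  finally show ?thesis .
qed

context
  fixes Yf :: "nat \<Rightarrow> rat poly poly" and k' :: nat
  assumes I: "\<And>a. a \<le> k' \<Longrightarrow> Inv a (Yf a)"
begin

lemma RR_big: "k' + 2 < j \<Longrightarrow> coeff (RR Yf k') j = 0"
  unfolding coeff_RR
proof -
  assume j: "k' + 2 < j"
  have "coeff (Yf k') j = 0" using Inv_big[OF I[of k']] j by simp
  moreover have "coeff (Yf a * Dp (Yf (k'-a))) j = 0" if "a \<in> {..k'}" for a
    using that j by (intro prod_big[OF I I]) auto
  ultimately show "coeff (Yf k') j + (\<Sum>a\<le>k'. coeff (Yf a * Dp (Yf (k'-a))) j) = 0" by simp
qed

lemma RR_mid:
  assumes j: "2 \<le> j" "j \<le> k' + 2"
  shows "st (2*(k'+2-j)) ((-1)^(k'+2-j)) (coeff (RR Yf k') j)"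
proof -
  have S: "st (2*(k'+2-j)) ((-1)^(k'+2-j)) (\<Sum>a\<le>k'. coeff (Yf a * Dp (Yf (k'-a))) j)"
  proof (rule st_sum[where a = 0])
    show "st (2*(k'+2-j)) ((-1)^(k'+2-j)) (coeff (Yf 0 * Dp (Yf (k'-0))) j)"
      using prod_st[OF I[of 0] I[of k'] j] by simp
    fix a assume a: "a \<in> {..k'}"
    then have e: "a + (k' - a) = k'" by simp
    have "j \<le> a + (k' - a) + 2" using e j by simp
    from prod_nn[OF I I this] a
    show "nn (2*(k'+2-j)) ((-1)^(k'+2-j)) (coeff (Yf a * Dp (Yf (k'-a))) j)"
      unfolding e by simp
  qed simp_all
  have N: "nn (2*(k'+2-j)) ((-1)^(k'+2-j)) (coeff (Yf k') j)"
  proof (cases "j = k' + 2")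
    case True
    then have "coeff (Yf k') j = 0" using Inv_big[OF I[of k']] by simp
    then show ?thesis by simp
  next
    case False
    then have "j \<le> Suc k'" using j by simp
    from Inv_nn[OF I[of k'] this] have "degree (coeff (Yf k') j) \<le> 2 * (Suc k' - j)"
      by (simp add: nn_def)
    also have "\<dots> < 2*(k'+2-j)" using \<open>j \<le> Suc k'\<close> by simp
    finally show ?thesis by (rule nn_low)
  qed
  show ?thesis unfolding coeff_RR using st_add[OF S N] by (simp add: add.commute)
qed

lemma RR_top: "coeff (RR Yf k') (k' + 2) = [:\<Sum>a\<le>k'. cc a * (of_nat (Suc (k'-a)) * cc (k'-a)):]"
proof -
  have "coeff (Yf k') (k'+2) = 0" using Inv_big[OF I[of k']] by simp
  moreover have "coeff (Yf a * Dp (Yf (k'-a))) (k'+2) = [:cc a * (of_nat (Suc (k'-a)) * cc (k'-a)):]"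
    if "a \<in> {..k'}" for a
  proof -
    have e: "a + (k' - a) + 2 = k' + 2" using that by simp
    show ?thesis using prod_top[OF I I, of a "k'-a"] that unfolding e by simp
  qed
  ultimately show ?thesis unfolding coeff_RR
    by (simp add: sum_const_poly)
qed

lemma RR_0: "coeff (RR Yf k') 0 = 0"
proof -
  have t: "coeff (Yf a * Dp (Yf (k'-a))) 0 =
      (if a = 0 then (if k' = 0 then [:1, 1:] else 0) else 0)" if "a \<le> k'" for a
  proof -
    have "coeff (Yf a * Dp (Yf (k'-a))) 0 = coeff (Yf a) 0 * coeff (Dp (Yf (k'-a))) 0"
      by (simp add: coeff_mult)
    also have "\<dots> = (if a = 0 then [:-1,-1:] else 0) * (if k' - a = 0 then [:-1:] else 0)"
      using Inv_0[OF I[OF that]] Inv_D(5)[OF I[of "k'-a"]] by simp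
    finally show ?thesis using that by auto
  qed
  have "(\<Sum>a\<le>k'. coeff (Yf a * Dp (Yf (k'-a))) 0) =
        (\<Sum>a\<le>k'. if a = 0 then (if k' = 0 then [:1, 1:] else 0) else 0)"
    by (rule sum.cong) (auto simp: t)
  also have "\<dots> = (if k' = 0 then [:1, 1:] else 0)" by (simp add: sum.delta)
  finally show ?thesis unfolding coeff_RR using Inv_0[OF I[of k']] by simp
qed

lemma RR_1: "coeff (RR Yf k') 1 = [:-1,-1:] * (pderiv (coeff (Yf k') 1) + coeff (Yf k') 1)"
proof -
  let ?y = "coeff (Yf k') 1"
  have t: "coeff (Yf a * Dp (Yf (k'-a))) 1 =
      (if a = 0 then [:-1,-1:] * coeff (Dp (Yf k')) 1 else 0) +
      (if a = k' then coeff (Yf k') 1 * [:-1:] else 0)" if "a \<le> k'" for a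
  proof -
    have "coeff (Yf a * Dp (Yf (k'-a))) 1 = coeff (Yf a) 0 * coeff (Dp (Yf (k'-a))) 1 +
            coeff (Yf a) 1 * coeff (Dp (Yf (k'-a))) 0"
      by (simp add: coeff_mult)
    also have "\<dots> = (if a = 0 then [:-1,-1:] else 0) * coeff (Dp (Yf (k'-a))) 1 +
          coeff (Yf a) 1 * (if k' - a = 0 then [:-1:] else 0)"
      using Inv_0[OF I[OF that]] Inv_D(5)[OF I[of "k'-a"]] by simp
    finally show ?thesis using that by auto
  qed
  have "(\<Sum>a\<le>k'. coeff (Yf a * Dp (Yf (k'-a))) 1) =
        (\<Sum>a\<le>k'. (if a = 0 then [:-1,-1:] * coeff (Dp (Yf k')) 1 else 0) +
      (if a = k' then coeff (Yf k') 1 * [:-1:] else 0))"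
    by (rule sum.cong[OF refl], rule t) simp
  also have "\<dots> = [:-1,-1:] * coeff (Dp (Yf k')) 1 + ?y * [:-1:]"
    by (simp add: sum.distrib sum.delta)
  finally have "coeff (RR Yf k') 1 = ?y + ([:-1,-1:] * coeff (Dp (Yf k')) 1 + ?y * [:-1:])"
    unfolding coeff_RR by simp
  also have "\<dots> = [:-1,-1:] * (pderiv ?y + ?y)"
    by (simp add: coeff_Dp algebra_simps)
  finally show ?thesis .
qed

lemma RR_1_st: "st (2*k' + 1) ((-1)^(Suc k')) (coeff (RR Yf k') 1)"
proof -
  let ?y = "coeff (Yf k') 1"
  have y: "st (2*k') ((-1)^k') ?y" using Inv_st[OF I[of k'], of 1] by simp
  have dy: "st (2*k') ((-1)^k') (pderiv ?y + smult 1 ?y)" by (rule st_Dc[OF y]) simp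
  have l: "st 1 (-1) [:-1,-1:]" by (simp add: st_def)
  show ?thesis unfolding RR_1 using st_mult[OF l dy] by (simp add: add.commute)
qed

end


lemma pw: "of_nat (Suc b) * (of_nat b + 1 :: rat)^(b-1) = (of_nat b + 1)^b"
  by (cases b) (simp_all add: algebra_simps)

lemma cc_rec: "of_nat (Suc k) * cc (Suc k) = (\<Sum>a\<le>k. cc a * (of_nat (Suc (k-a)) * cc (k-a)))"
proof -
  have t: "cc a * (of_nat (Suc (k-a)) * cc (k-a)) =
     of_nat (k choose a) * (of_nat a + 1)^(a-1) * (of_nat (k-a) + 1)^(k-a) / fact k" if a: "a \<le> k" for a
  proof -
    have bf: "(of_nat (k choose a) :: rat) = fact k / (fact a * fact (k - a))"
      using a by (rule binomial_fact)
    have "cc a * (of_nat (Suc (k-a)) * cc (k-a)) =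
         (of_nat a + 1)^(a-1) / fact a * ((of_nat (Suc (k-a)) * (of_nat (k-a) + 1)^(k-a-1)) / fact (k-a))"
      by (simp add: cc_def)
    also have "\<dots> = (of_nat a + 1)^(a-1) / fact a * ((of_nat (k-a) + 1)^(k-a) / fact (k-a))"
      by (simp only: pw)
    also have "\<dots> = of_nat (k choose a) * (of_nat a + 1)^(a-1) * (of_nat (k-a) + 1)^(k-a) / fact k"
      unfolding bf by (simp add: field_simps)
    finally show ?thesis .
  qed
  have "(\<Sum>a\<le>k. cc a * (of_nat (Suc (k-a)) * cc (k-a))) =
        (\<Sum>a\<le>k. of_nat (k choose a) * (of_nat a + 1)^(a-1) * (of_nat (k-a) + 1)^(k-a)) / fact k"
    unfolding sum_divide_distrib by (rule sum.cong[OF refl], rule t) simp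
  also have "\<dots> = (of_nat k + 2)^k / fact k" by (simp only: abel)
  also have "\<dots> = of_nat (Suc k) * cc (Suc k)"
  proof -
    have "cc (Suc k) = (of_nat k + 2)^k / (of_nat (Suc k) * fact k)"
      by (simp add: cc_def add.commute)
    moreover have "(of_nat (Suc k) :: rat) \<noteq> 0" by simp
    ultimately show ?thesis by (simp del: of_nat_Suc)
  qed
  finally show ?thesis by simp
qed


lemma st_solve:
  assumes "st d s r" "0 < c" "pderiv q + smult c q = r" "degree q \<le> degree r"
          "coeff q (degree r) = lead_coeff r / c"
  shows "st d s q"
proof -
  have dr: "degree r = d" using st_degree[OF assms(1)] .
  have l: "0 < s * lead_coeff r" using st_lc[OF assms(1)] .
  have "s * coeff q d = (s * lead_coeff r) / c" using assms(5) dr by simp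
  also have "\<dots> > 0" using l assms(2) by simp
  finally show ?thesis unfolding st_def using assms(4) dr by simp
qed

lemma solve_step:
  fixes R :: "rat poly poly" and k' :: nat
  assumes R0: "coeff R 0 = 0"
    and Rbig: "\<And>j. k' + 2 < j \<Longrightarrow> coeff R j = 0"
    and Rmid: "\<And>j. 2 \<le> j \<Longrightarrow> j \<le> k' + 2 \<Longrightarrow> st (2*(k'+2-j)) ((-1)^(k'+2-j)) (coeff R j)"
    and R1: "st (2*k'+1) ((-1)^(Suc k')) (coeff R 1)"
    and Rtop: "coeff R (k'+2) = [:of_nat (Suc k') * cc (Suc k'):]"
  shows "\<exists>Y. Dp Y = Y + R \<and> ev Y $ 0 = 0 \<and> Inv (Suc k') Y"
proof -
  obtain q1 where q1: "pderiv q1 = coeff R 1" "degree q1 \<le> Suc (degree (coeff R 1))"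
      "coeff q1 (Suc (degree (coeff R 1))) = lead_coeff (coeff R 1) / of_nat (Suc (degree (coeff R 1)))"
    using antideriv by blast
  have "\<forall>j. \<exists>q. 2 \<le> j \<longrightarrow> (pderiv q + smult (of_nat j - 1) q = coeff R j \<and>
          degree q \<le> degree (coeff R j) \<and> coeff q (degree (coeff R j)) = lead_coeff (coeff R j) / (of_nat j - 1))"
  proof
    fix j :: nat
    show "\<exists>q. 2 \<le> j \<longrightarrow> (pderiv q + smult (of_nat j - 1) q = coeff R j \<and>
          degree q \<le> degree (coeff R j) \<and> coeff q (degree (coeff R j)) = lead_coeff (coeff R j) / (of_nat j - 1))"
    proof (cases "2 \<le> j")
      case True
      then have "(of_nat j - 1 :: rat) \<noteq> 0" by simp
      from solve_lin[OF this, of "coeff R j"] show ?thesis by blast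
    qed simp
  qed
  then obtain g where g: "\<And>j. 2 \<le> j \<Longrightarrow> pderiv (g j) + smult (of_nat j - 1) (g j) = coeff R j \<and>
          degree (g j) \<le> degree (coeff R j) \<and> coeff (g j) (degree (coeff R j)) = lead_coeff (coeff R j) / (of_nat j - 1)"
    by metis
  define q0 where "q0 j = (if j = 0 then 0 else if j = 1 then q1 else g j)" for j
  define c where "c = (\<Sum>j\<le>k'+2. coeff (q0 j) 0)"
  define q where "q j = q0 j - (if j = 1 then [:c:] else 0)" for j
  define Y where "Y = (\<Sum>j\<le>k'+2. monom (q j) j)"
  have cY: "coeff Y j = (if j \<le> k'+2 then q j else 0)" for j
    unfolding Y_def coeff_sum coeff_monom by (simp add: sum.delta)
  have dY: "degree Y \<le> k' + 2" by (rule degree_le) (simp add: cY)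
  have E: "Dp Y = Y + R"
  proof (rule poly_eqI)
    fix j
    show "coeff (Dp Y) j = coeff (Y + R) j"
    proof (cases "k' + 2 < j")
      case True then show ?thesis by (simp add: coeff_Dp cY Rbig)
    next
      case False
      then have jl: "j \<le> k' + 2" by simp
      show ?thesis
      proof (cases "j = 0")
        case True then show ?thesis by (simp add: coeff_Dp cY q_def q0_def R0)
      next
        case False
        show ?thesis
        proof (cases "j = 1")
          case True then show ?thesis
            by (simp add: coeff_Dp cY q_def q0_def q1(1) pderiv_diff)
        next
          case False
          then have j2: "2 \<le> j" using \<open>j \<noteq> 0\<close> by simp
          have "pderiv (g j) + smult (of_nat j) (g j) = g j + (pderiv (g j) + smult (of_nat j - 1) (g j))"
            by (simp add: algebra_simps smult_diff_left)
          then show ?thesis using g[OF j2] jl j2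
            by (simp add: coeff_Dp cY q_def q0_def)
        qed
      qed
    qed
  qed
  have Z: "ev Y $ 0 = 0"
  proof -
    have "ev Y $ 0 = (\<Sum>j\<le>k'+2. coeff (q j) 0)" by (simp add: ev_nth0_bound[OF dY] cY)
    also have "\<dots> = (\<Sum>j\<le>k'+2. coeff (q0 j) 0 - (if j = 1 then c else 0))"
      by (rule sum.cong[OF refl]) (simp add: q_def)
    also have "\<dots> = c - c" by (simp add: sum_subtractf sum.delta c_def)
    finally show ?thesis by simp
  qed
  have stY: "st (2 * (Suc (Suc k') - j)) ((- 1) ^ (Suc (Suc k') - j)) (coeff Y j)"
    if j: "j \<in> {1..Suc (Suc k')}" for j
    proof (cases "j = 1")
      case True
      let ?r = "coeff R 1"
      have dr: "degree ?r = 2*k'+1" using st_degree[OF R1] .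
      have lr: "0 < (-1)^(Suc k') * lead_coeff ?r" using st_lc[OF R1] .
      have d: "degree (q1 - [:c:]) \<le> 2*k'+2"
        using q1(2) dr by (intro degree_diff_le) auto
      have "(-1)^(Suc k') * coeff (q1 - [:c:]) (2*k'+2) = ((-1)^(Suc k') * lead_coeff ?r) / of_nat (2*k'+2)"
        using q1(3) dr by simp
      also have "\<dots> > 0" by (intro divide_pos_pos) (use lr in simp_all)
      finally have "st (2*k'+2) ((-1)^(Suc k')) (q1 - [:c:])" unfolding st_def using d by simp
      then show ?thesis using True by (simp add: cY q_def q0_def)
    next
      case False
      then have j2: "2 \<le> j" "j \<le> k' + 2" using j by auto
      have e: "Suc (Suc k') - j = k' + 2 - j" by simp
      have "st (2*(k'+2-j)) ((-1)^(k'+2-j)) (g j)"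
        by (rule st_solve[OF Rmid[OF j2]]) (use g[OF j2(1)] j2 in auto)
      then show ?thesis using j2 unfolding e by (simp add: cY q_def q0_def)
    qed
  have Inv: "Inv (Suc k') Y"
    unfolding Inv_def
  proof (intro conjI allI impI ballI)
    fix j assume "Suc (Suc k') < j"
    then show "coeff Y j = 0" by (simp add: cY)
  next
    show "coeff Y 0 = (if Suc k' = 0 then [:-1, -1:] else 0)" by (simp add: cY q_def q0_def)
  next
    have gt: "pderiv (g (k'+2)) + smult (of_nat (k'+2) - 1) (g (k'+2)) = [:of_nat (Suc k') * cc (Suc k'):]"
      "degree (g (k'+2)) = 0"
      using g[of "k'+2"] Rtop by auto
    then obtain g0 where g0: "g (k'+2) = [:g0:]" by (metis degree_eq_zeroE)
    have "of_nat (Suc k') * g0 = of_nat (Suc k') * cc (Suc k')"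
      using gt(1) unfolding g0 by (simp add: algebra_simps)
    then have "g0 = cc (Suc k')" by (simp del: of_nat_Suc)
    then show "coeff Y (Suc (Suc k')) = [:cc (Suc k'):]"
      using g0 by (simp add: cY q_def q0_def)
  next
    fix j assume j: "j \<in> {1..Suc (Suc k')}"
    then show "st (2 * (Suc (Suc k') - j)) ((- 1) ^ (Suc (Suc k') - j)) (coeff Y j)" by (rule stY)
  next
    fix j assume j: "j \<le> Suc (Suc k')"
    show "nn (2 * (Suc (Suc k') - j)) ((- 1) ^ (Suc (Suc k') - j)) (coeff Y j)"
    proof (cases "j = 0")
      case True then show ?thesis by (simp add: cY q_def q0_def)
    next
      case False then show ?thesis using stY[of j] j by (intro st_nn) auto
    qed
  qed
  show ?thesis using E Z Inv by blast
qed


lemma alpha_nth0: "alpha k $ 0 = 0" by (simp add: alpha_nth)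

lemma ev_RR:
  assumes "\<And>a. a \<le> k' \<Longrightarrow> alpha a = ev (Yf a)"
  shows "ev (RR Yf k') = alpha k' + (\<Sum>a\<le>k'. alpha a * fps_deriv (alpha (k'-a)))"
  unfolding RR_def using assms
  by (simp add: ev_add ev_sum ev_mult ev_Dp[symmetric])

lemma RR_all:
  assumes I: "\<And>a. a \<le> k' \<Longrightarrow> Inv a (Yf a)"
  shows "coeff (RR Yf k') 0 = 0"
    and "\<And>j. k' + 2 < j \<Longrightarrow> coeff (RR Yf k') j = 0"
    and "\<And>j. 2 \<le> j \<Longrightarrow> j \<le> k' + 2 \<Longrightarrow> st (2*(k'+2-j)) ((-1)^(k'+2-j)) (coeff (RR Yf k') j)"
    and "st (2*k'+1) ((-1)^(Suc k')) (coeff (RR Yf k') 1)"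
    and "coeff (RR Yf k') (k'+2) = [:of_nat (Suc k') * cc (Suc k'):]"
  using RR_0[OF I] RR_big[OF I] RR_mid[OF I] RR_1_st[OF I] RR_top[OF I] cc_rec[of k'] by auto

lemma Y0_ok: "alpha 0 = ev [:[:-1,-1:], 1:] \<and> Inv 0 [:[:-1,-1:], 1:]"
proof
  have "ev [:[:-1,-1:], 1:] = fps_of_poly [:-1,-1:] + fps_exp 1"
    by (simp add: ev_pCons)
  also have "fps_of_poly [:-1,-1:] = - 1 - (fps_X :: rat fps)"
    by (simp add: fps_of_poly_pCons algebra_simps)
  finally show "alpha 0 = ev [:[:-1,-1:], 1:]" by (simp add: alpha0)
  show "Inv 0 [:[:-1,-1:], 1:]"
    unfolding Inv_def
  proof (intro conjI allI impI ballI)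
    fix j :: nat assume "Suc 0 < j"
    then show "coeff [:[:-1,-1:], 1:] j = 0" by (cases j; cases "j - 1") auto
  next
    fix j :: nat assume "j \<le> Suc 0"
    then have "j = 0 \<or> j = 1" by auto
    then show "nn (2 * (Suc 0 - j)) ((- 1) ^ (Suc 0 - j)) (coeff [:[:-1,-1:], 1:] j)"
      by (auto simp: nn_def numeral_2_eq_2)
  next
    fix j :: nat assume "j \<in> {1..Suc 0}"
    then have "j = 1" by auto
    then show "st (2 * (Suc 0 - j)) ((- 1) ^ (Suc 0 - j)) (coeff [:[:-1,-1:], 1:] j)"
      by (simp add: st_def)
  qed (simp_all add: cc_def)
qed

lemma main: "\<forall>a\<le>k. \<exists>Y. alpha a = ev Y \<and> Inv a Y"
proof (induction k)
  case 0 then show ?case using Y0_ok by auto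
next
  case (Suc k')
  have "\<forall>a. \<exists>Y. a \<le> k' \<longrightarrow> alpha a = ev Y \<and> Inv a Y" using Suc.IH by auto
  then obtain Yf where Yf: "\<And>a. a \<le> k' \<Longrightarrow> alpha a = ev (Yf a) \<and> Inv a (Yf a)" by metis
  have I: "\<And>a. a \<le> k' \<Longrightarrow> Inv a (Yf a)" using Yf by blast
  note R = RR_all[OF I]
  obtain Y where Y: "Dp Y = Y + RR Yf k'" "ev Y $ 0 = 0" "Inv (Suc k') Y"
    using solve_step[OF R(1) R(2) R(3) R(4) R(5)] by blast
  have evR: "ev (RR Yf k') = alpha k' + (\<Sum>a\<le>k'. alpha a * fps_deriv (alpha (k'-a)))"
    by (rule ev_RR) (use Yf in blast)
  have "alpha (Suc k') = ev Y"
  proof (rule fps_ode_unique)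
    show "fps_deriv (alpha (Suc k')) = alpha (Suc k') + ev (RR Yf k')"
      unfolding evR alpha_ode by (simp add: add.assoc)
    show "fps_deriv (ev Y) = ev Y + ev (RR Yf k')"
      by (simp add: ev_Dp Y(1) ev_add)
    show "alpha (Suc k') $ 0 = ev Y $ 0" by (simp add: alpha_nth0 Y(2))
  qed
  then show ?case using Suc.IH Y(3) by (auto simp: le_Suc_eq)
qed


lemma sign_cancel: "(-1::rat fps)^m * fps_of_poly (smult ((-1)^m) p) = fps_of_poly p"
proof -
  have a: "(-1::rat fps) = fps_const (-1)" by simp
  have sq: "(-1::rat)^m * (-1)^m = 1"
  proof -
    have "(-1::rat)^m * (-1)^m = ((-1) * (-1))^m" by (rule power_mult_distrib[symmetric])
    then show ?thesis by simp
  qed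
  have "(-1::rat fps)^m * fps_of_poly (smult ((-1)^m) p) = fps_const ((-1)^m * (-1)^m) * fps_of_poly p"
    unfolding a fps_of_poly_smult fps_const_power by (simp add: mult.assoc)
  then show ?thesis unfolding sq by simp
qed

theorem lemma4p2:
  fixes k :: nat
  assumes "k \<ge> 1"
  shows "\<exists>f :: nat \<Rightarrow> rat poly.
           (\<forall>m\<in>{1..k-1}. degree (f m) = 2 * m \<and> lead_coeff (f m) > 0) \<and>
           degree (f k) = 2 * k - 1 \<and> lead_coeff (f k) > 0 \<and>
           fps_deriv (alpha k) =
             alpha k
             + fps_const (of_nat k * of_nat (k + 1) ^ k / fact (k + 1)) * fps_exp (of_nat (k + 1))
             + fps_exp 1 * (\<Sum>m=1..k. (-1) ^ m * fps_of_poly (f m) * fps_exp (of_nat (k - m)))"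
proof -
  obtain k' where kk: "k = Suc k'" using assms by (cases k) auto
  have "\<forall>a. \<exists>Y. a \<le> k' \<longrightarrow> alpha a = ev Y \<and> Inv a Y" using main[of k'] by auto
  then obtain Yf where Yf: "\<And>a. a \<le> k' \<Longrightarrow> alpha a = ev (Yf a) \<and> Inv a (Yf a)" by metis
  have I: "\<And>a. a \<le> k' \<Longrightarrow> Inv a (Yf a)" using Yf by blast
  define R where "R = RR Yf k'"
  have RP1: "coeff R 0 = 0" unfolding R_def by (rule RR_0[OF I])
  have RP2: "\<And>j. k' + 2 < j \<Longrightarrow> coeff R j = 0" unfolding R_def by (rule RR_big[OF I])
  have RP3: "\<And>j. 2 \<le> j \<Longrightarrow> j \<le> k' + 2 \<Longrightarrow> st (2*(k'+2-j)) ((-1)^(k'+2-j)) (coeff R j)"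
    unfolding R_def by (rule RR_mid[OF I])
  have RP4: "st (2*k'+1) ((-1)^(Suc k')) (coeff R 1)" unfolding R_def by (rule RR_1_st[OF I])
  have RP5: "coeff R (k'+2) = [:of_nat (Suc k') * cc (Suc k'):]"
    unfolding R_def cc_rec by (rule RR_top[OF I])
  have evR: "ev R = alpha k' + (\<Sum>a\<le>k'. alpha a * fps_deriv (alpha (k'-a)))"
    unfolding R_def by (rule ev_RR) (use Yf in blast)
  have ode: "fps_deriv (alpha k) = alpha k + ev R"
    unfolding evR kk alpha_ode by (simp add: add.assoc)
  define f where "f m = smult ((-1)^m) (coeff R (k + 1 - m))" for m
  define G where "G j = fps_of_poly (coeff R j) * fps_exp (of_nat j)" for j
  have dR: "degree R \<le> k' + 2" by (rule degree_le) (simp add: RP2)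
  have "ev R = (\<Sum>j\<le>Suc (Suc k'). G j)" unfolding G_def using ev_bound[OF dR] by simp
  also have "\<dots> = (\<Sum>i\<le>k'. G (Suc i)) + G (k' + 2)"
  proof -
    have g0: "G 0 = 0" by (simp add: G_def RP1)
    have "(\<Sum>j\<le>Suc (Suc k'). G j) = (\<Sum>j\<le>Suc k'. G j) + G (Suc (Suc k'))"
      by (rule sum.atMost_Suc)
    also have "(\<Sum>j\<le>Suc k'. G j) = G 0 + (\<Sum>i\<le>k'. G (Suc i))"
      by (rule sum.atMost_Suc_shift)
    finally show ?thesis using g0 by (simp add: numeral_2_eq_2)
  qed
  finally have evR2: "ev R = (\<Sum>i\<le>k'. G (Suc i)) + G (k' + 2)" .
  have top: "G (k'+2) = fps_const (of_nat k * of_nat (k + 1) ^ k / fact (k + 1)) * fps_exp (of_nat (k + 1))"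
  proof -
    have "of_nat (Suc k') * cc (Suc k') = (of_nat k * of_nat (k + 1) ^ k / fact (k + 1) :: rat)"
    proof -
      have h: "(of_nat (Suc k') + 1 :: rat) = of_nat (Suc (Suc k'))" by simp
      show ?thesis unfolding kk cc_def h
        by (simp add: field_simps del: of_nat_Suc)
    qed
    then show ?thesis unfolding G_def using kk RP5 by (simp add: fps_of_poly_const)
  qed
  have mid: "fps_exp 1 * (\<Sum>m=1..k. (-1) ^ m * fps_of_poly (f m) * fps_exp (of_nat (k - m))) =
             (\<Sum>i\<le>k'. G (Suc i))"
  proof -
    have "fps_exp 1 * (\<Sum>m=1..k. (-1) ^ m * fps_of_poly (f m) * fps_exp (of_nat (k - m))) =
          (\<Sum>m=1..k. G (k + 1 - m))"
      unfolding sum_distrib_left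
    proof (rule sum.cong[OF refl])
      fix m assume m: "m \<in> {1..k}"
      have e: "fps_exp 1 * fps_exp (of_nat (k - m)) = fps_exp (of_nat (k + 1 - m) :: rat)"
        using m by (simp add: fps_exp_add_mult[symmetric] of_nat_diff add.commute)
      have "fps_exp 1 * ((-1) ^ m * fps_of_poly (f m) * fps_exp (of_nat (k - m))) =
            ((-1) ^ m * fps_of_poly (f m)) * (fps_exp 1 * fps_exp (of_nat (k - m)))"
        by (simp only: ac_simps)
      also have "\<dots> = G (k + 1 - m)" unfolding e f_def sign_cancel G_def ..
      finally show "fps_exp 1 * ((-1) ^ m * fps_of_poly (f m) * fps_exp (of_nat (k - m))) = G (k + 1 - m)" .
    qed
    also have "\<dots> = (\<Sum>i\<le>k'. G (Suc i))"
      by (rule sum.reindex_bij_witness[where i = "\<lambda>i. k - i" and j = "\<lambda>m. k - m"]) (auto simp: kk Suc_diff_le)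
    finally show ?thesis .
  qed
  have degs: "\<forall>m\<in>{1..k-1}. degree (f m) = 2 * m \<and> lead_coeff (f m) > 0"
  proof
    fix m assume m: "m \<in> {1..k-1}"
    then have j: "2 \<le> k + 1 - m" "k + 1 - m \<le> k' + 2" using kk by auto
    have e: "k' + 2 - (k + 1 - m) = m" using m kk by auto
    have s: "st (2*m) ((-1)^m) (coeff R (k+1-m))" using RP3[OF j] unfolding e .
    show "degree (f m) = 2 * m \<and> lead_coeff (f m) > 0"
      using st_degree[OF s] st_lc[OF s] by (simp add: f_def lead_coeff_smult)
  qed
  have s1: "st (2*k'+1) ((-1)^(Suc k')) (coeff R (k + 1 - k))" using RP4 by simp
  have dk: "degree (f k) = 2 * k - 1" using st_degree[OF s1] kk by (simp add: f_def)
  have lk: "lead_coeff (f k) > 0" using st_lc[OF s1] kk by (simp add: f_def lead_coeff_smult)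
  show ?thesis
  proof (intro exI[of _ f] conjI degs dk lk)
    show "fps_deriv (alpha k) =
             alpha k
             + fps_const (of_nat k * of_nat (k + 1) ^ k / fact (k + 1)) * fps_exp (of_nat (k + 1))
             + fps_exp 1 * (\<Sum>m=1..k. (-1) ^ m * fps_of_poly (f m) * fps_exp (of_nat (k - m)))"
      unfolding ode evR2 mid top[symmetric] by (simp add: ac_simps)
  qed
qed


end
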